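(* Let $I$ be the tridendriform ideal of $\mathcal{A}$ generated by $\{x\cdot y: x,y\in\mathcal{A}^+\}$. A tree $t$ of $\mathcal{A}$ is not binary (i.e. some internal vertex has at least three children) if and only if $t\in I$.
   Context: Trees: planar rooted trees in which every internal vertex has at least two children; the root vertex hangs from a trunk edge; leaves are edges without upper vertex; $|$ is the one-leaf tree; $\mathcal A$ is the $\mathbb K$-span of all trees, $\mathcal A^+$ that of trees $\neq|$. Products: $x_0\vee\cdots\vee x_k$ ($k\ge1$) grafts trees left to right on a new root; for $x=x^{(0)}\vee\cdots\vee x^{(k)}$, $y=y^{(0)}\vee\cdots\vee y^{(l)}$: $x\prec y=x^{(0)}\vee\cdots\vee x^{(k-1)}\vee(x^{(k)}*y)$, $x\cdot y=x^{(0)}\vee\cdots\vee x^{(k-1)}\vee(x^{(k)}*y^{(0)})\vee y^{(1)}\vee\cdots\vee y^{(l)}$, $x\succ y=(x*y^{(0)})\vee y^{(1)}\vee\cdots\vee y^{(l)}$, $*=\prec+\cdot+\succ$, $|*z=z*|=z$; for $a\in\mathcal A^+$: $|\prec a=0$, $a\prec|=a$, $|\succ a=a$, $a\succ|=0$, $|\cdot a=a\cdot|=0$. A tridendriform ideal is a subspace $J$ such that $x\ltimes y\in J$ whenever $x\in J$ or $y\in J$, for $\ltimes\in\{\prec,\cdot,\succ\}$; the ideal generated by a set is the smallest tridendriform ideal containing it. *)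

theory Defs
  imports Main
begin

text \<open>Leaf is the one-leaf tree |; Node [x0,...,xk] is x0 v ... v xk.
  Only well-formed trees (every internal vertex has at least two children) are used.\<close>

datatype tree = Leaf | Node "tree list"

fun wf_tree :: "tree \<Rightarrow> bool" where
  "wf_tree Leaf = True"
| "wf_tree (Node ts) = (2 \<le> length ts \<and> (\<forall>t\<in>set ts. wf_tree t))"

fun binary_tree :: "tree \<Rightarrow> bool" where
  "binary_tree Leaf = True"
| "binary_tree (Node ts) = (length ts = 2 \<and> (\<forall>t\<in>set ts. binary_tree t))"

section \<open>Linear combinations of trees (finitely supported functions)\<close>

definition supp :: "(tree \<Rightarrow> 'k::field) \<Rightarrow> tree set" where
  "supp f = {t. f t \<noteq> 0}"

definition basis :: "tree \<Rightarrow> tree \<Rightarrow> 'k::field" where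
  "basis t = (\<lambda>s. if s = t then 1 else 0)"

definition Aspace :: "(tree \<Rightarrow> 'k::field) set" where
  "Aspace = {f. finite (supp f) \<and> (\<forall>t\<in>supp f. wf_tree t)}"

definition Aplus :: "(tree \<Rightarrow> 'k::field) set" where
  "Aplus = {f. f \<in> Aspace \<and> f Leaf = 0}"

definition lmap :: "(tree \<Rightarrow> tree) \<Rightarrow> (tree \<Rightarrow> 'k::field) \<Rightarrow> tree \<Rightarrow> 'k" where
  "lmap h f = (\<lambda>s. \<Sum>t\<in>{t. f t \<noteq> 0 \<and> h t = s}. f t)"

function star_t :: "tree \<Rightarrow> tree \<Rightarrow> tree \<Rightarrow> 'k::field" where
  "star_t Leaf y = basis y"
| "star_t (Node xs) Leaf = basis (Node xs)"
| "star_t (Node []) (Node ys) = (\<lambda>_. 0)"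
| "star_t (Node (x # xs)) (Node []) = (\<lambda>_. 0)"
| "star_t (Node (x # xs)) (Node (y # ys)) =
     (\<lambda>s. lmap (\<lambda>t. Node (butlast (x # xs) @ [t])) (star_t (last (x # xs)) (Node (y # ys))) s
        + lmap (\<lambda>t. Node (butlast (x # xs) @ [t] @ ys)) (star_t (last (x # xs)) y) s
        + lmap (\<lambda>t. Node (t # ys)) (star_t (Node (x # xs)) y) s)"
  by pat_completeness auto

lemma size_last_less: "size (last (x # xs)) < Suc (size_list size (x # xs))"
proof -
  have "last (x # xs) \<in> set (x # xs)" by simp
  then have "size (last (x # xs)) \<le> size_list size (x # xs)"
    by (rule size_list_estimation') simp
  then show ?thesis by simp
qed

termination
  by (relation "measure (\<lambda>(x, y). size x + size y)")
     (auto simp del: last.simps intro: less_le_trans[OF size_last_less])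

definition prec_t :: "tree \<Rightarrow> tree \<Rightarrow> tree \<Rightarrow> 'k::field" where
  "prec_t x y = (case x of Leaf \<Rightarrow> (\<lambda>_. 0)
     | Node xs \<Rightarrow> (if y = Leaf then basis x
        else lmap (\<lambda>t. Node (butlast xs @ [t])) (star_t (last xs) y)))"

definition dot_t :: "tree \<Rightarrow> tree \<Rightarrow> tree \<Rightarrow> 'k::field" where
  "dot_t x y = (case x of Leaf \<Rightarrow> (\<lambda>_. 0)
     | Node xs \<Rightarrow> (case y of Leaf \<Rightarrow> (\<lambda>_. 0)
        | Node ys \<Rightarrow> lmap (\<lambda>t. Node (butlast xs @ [t] @ tl ys)) (star_t (last xs) (hd ys))))"

definition succ_t :: "tree \<Rightarrow> tree \<Rightarrow> tree \<Rightarrow> 'k::field" where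
  "succ_t x y = (case y of Leaf \<Rightarrow> (\<lambda>_. 0)
     | Node ys \<Rightarrow> (if x = Leaf then basis y
        else lmap (\<lambda>t. Node (t # tl ys)) (star_t x (hd ys))))"

definition bil :: "(tree \<Rightarrow> tree \<Rightarrow> tree \<Rightarrow> 'k::field) \<Rightarrow> (tree \<Rightarrow> 'k) \<Rightarrow> (tree \<Rightarrow> 'k) \<Rightarrow> tree \<Rightarrow> 'k" where
  "bil op f g = (\<lambda>s. \<Sum>t\<in>supp f. \<Sum>u\<in>supp g. f t * g u * op t u s)"

definition tridend_ideal :: "(tree \<Rightarrow> 'k::field) set \<Rightarrow> bool" where
  "tridend_ideal J \<longleftrightarrow> J \<subseteq> Aspace \<and> (\<lambda>_. 0) \<in> J
     \<and> (\<forall>f\<in>J. \<forall>g\<in>J. (\<lambda>s. f s + g s) \<in> J)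
     \<and> (\<forall>c. \<forall>f\<in>J. (\<lambda>s. c * f s) \<in> J)
     \<and> (\<forall>x\<in>Aspace. \<forall>y\<in>Aspace. (x \<in> J \<or> y \<in> J) \<longrightarrow>
          bil prec_t x y \<in> J \<and> bil dot_t x y \<in> J \<and> bil succ_t x y \<in> J)"

definition gen_tridend_ideal :: "(tree \<Rightarrow> 'k::field) set \<Rightarrow> (tree \<Rightarrow> 'k) set" where
  "gen_tridend_ideal G = \<Inter>{J. tridend_ideal J \<and> G \<subseteq> J}"

end

theory Submission
  imports Defs
begin

fun nl :: "tree \<Rightarrow> nat" where
  "nl Leaf = 1"
| "nl (Node ts) = sum_list (map nl ts)"

fun ni :: "tree \<Rightarrow> nat" where
  "ni Leaf = 0"
| "ni (Node ts) = Suc (sum_list (map ni ts))"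

lemma sum_le_aux: "(\<forall>c\<in>set ts. ni c + 1 \<le> nl c) \<Longrightarrow>
  sum_list (map ni ts) + length ts \<le> sum_list (map nl ts)"
  by (induction ts) fastforce+

lemma ni_nl: "wf_tree t \<Longrightarrow> ni t + 1 \<le> nl t"
proof (induction t)
  case Leaf then show ?case by simp
next
  case (Node ts)
  then have "sum_list (map ni ts) + length ts \<le> sum_list (map nl ts)"
    by (intro sum_le_aux) auto
  with Node.prems show ?case by simp
qed

lemma ni_nl_bin: "binary_tree t \<Longrightarrow> ni t + 1 = nl t"
proof (induction t)
  case Leaf then show ?case by simp
next
  case (Node ts)
  then obtain a b where ts: "ts = [a, b]"
    by (auto simp: length_Suc_conv numeral_2_eq_2)
  have "Suc (ni a) = nl a" "Suc (ni b) = nl b" using Node ts by auto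
  then show ?case using ts by simp
qed

lemma ni_nl_nonbin: "wf_tree t \<Longrightarrow> \<not> binary_tree t \<Longrightarrow> ni t + 2 \<le> nl t"
proof (induction t)
  case Leaf then show ?case by simp
next
  case (Node ts)
  have s: "sum_list (map ni ts) + length ts \<le> sum_list (map nl ts)"
  proof (intro sum_le_aux ballI)
    fix c assume "c \<in> set ts" then show "ni c + 1 \<le> nl c" using Node.prems by (intro ni_nl) auto
  qed
  show ?case
  proof (cases "length ts = 2")
    case True
    then obtain a b where ts: "ts = [a, b]"
      by (auto simp: length_Suc_conv numeral_2_eq_2)
    have "\<not> binary_tree a \<or> \<not> binary_tree b" using Node.prems ts by auto
    moreover have "ni a + 1 \<le> nl a" "ni b + 1 \<le> nl b" using Node.prems ts ni_nl[of a] ni_nl[of b] by auto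
    moreover have "\<not> binary_tree a \<Longrightarrow> ni a + 2 \<le> nl a" using Node ts by auto
    moreover have "\<not> binary_tree b \<Longrightarrow> ni b + 2 \<le> nl b" using Node ts by auto
    ultimately show ?thesis using ts by auto
  next
    case False
    with Node.prems have "3 \<le> length ts" by auto
    with s show ?thesis by simp
  qed
qed

definition good :: "(tree \<Rightarrow> 'k::field) \<Rightarrow> tree \<Rightarrow> tree \<Rightarrow> bool" where
  "good f a b \<longleftrightarrow> finite (supp f) \<and>
     (\<forall>s\<in>supp f. wf_tree s \<and> nl s + 1 = nl a + nl b \<and> ni s \<le> ni a + ni b)"

lemma supp_basis: "supp (basis a :: tree \<Rightarrow> 'k::field) = {a}"
  by (auto simp: supp_def basis_def)

lemma supp_lmap: "supp (lmap h f) \<subseteq> h ` supp f"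
proof
  fix s assume "s \<in> supp (lmap h f)"
  then have ne: "(\<Sum>t\<in>{t. f t \<noteq> 0 \<and> h t = s}. f t) \<noteq> 0"
    by (simp add: supp_def lmap_def)
  then have "{t. f t \<noteq> 0 \<and> h t = s} \<noteq> {}" by (metis sum.empty)
  then show "s \<in> h ` supp f" by (auto simp: supp_def)
qed

lemma lmap_basis: "lmap h (basis a :: tree \<Rightarrow> 'k::field) = basis (h a)"
proof
  fix s
  have "{t. (basis a t :: 'k) \<noteq> 0 \<and> h t = s} = (if h a = s then {a} else {})"
    by (auto simp: basis_def)
  then show "lmap h (basis a :: tree \<Rightarrow> 'k::field) s = basis (h a) s"
    by (auto simp: lmap_def basis_def)
qed

lemma good_basis: "wf_tree s \<Longrightarrow> nl s + 1 = nl a + nl b \<Longrightarrow> ni s \<le> ni a + ni b \<Longrightarrow>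
  good (basis s :: tree \<Rightarrow> 'k::field) a b"
  by (simp add: good_def supp_basis)

lemma good_zero: "good (\<lambda>_. 0 :: 'k::field) a b"
  by (simp add: good_def supp_def)

lemma good_add:
  assumes "good (f :: tree \<Rightarrow> 'k::field) a b" "good g a b"
  shows "good (\<lambda>s. f s + g s) a b"
proof -
  have "supp (\<lambda>s. f s + g s) \<subseteq> supp f \<union> supp g" by (auto simp: supp_def)
  with assms show ?thesis unfolding good_def by (meson Un_iff finite_Un rev_finite_subset subsetD)
qed

lemma good_lmap:
  assumes "good (F :: tree \<Rightarrow> 'k::field) a b"
    and "\<And>t. wf_tree t \<Longrightarrow> nl t + 1 = nl a + nl b \<Longrightarrow> ni t \<le> ni a + ni b \<Longrightarrow>
      wf_tree (h t) \<and> nl (h t) + 1 = nl a' + nl b' \<and> ni (h t) \<le> ni a' + ni b'"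
  shows "good (lmap h F) a' b'"
proof -
  have fin: "finite (supp (lmap h F))"
    using assms(1) supp_lmap[of h F] unfolding good_def by (meson finite_imageI rev_finite_subset)
  show ?thesis unfolding good_def
  proof (rule conjI[OF fin], intro ballI)
    fix s assume "s \<in> supp (lmap h F)"
    then obtain t where t: "t \<in> supp F" "s = h t" using supp_lmap by blast
    then have "wf_tree t \<and> nl t + 1 = nl a + nl b \<and> ni t \<le> ni a + ni b"
      using assms(1) unfolding good_def by blast
    then show "wf_tree s \<and> nl s + 1 = nl a' + nl b' \<and> ni s \<le> ni a' + ni b'"
      using assms(2) t(2) by blast
  qed
qed

lemma sum_bl: "X \<noteq> [] \<Longrightarrow> sum_list (map (f::tree\<Rightarrow>nat) X) = sum_list (map f (butlast X)) + f (last X)"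
proof -
  assume "X \<noteq> []"
  have "sum_list (map f (butlast X @ [last X])) = sum_list (map f (butlast X)) + f (last X)" by simp
  then show ?thesis using \<open>X \<noteq> []\<close> by simp
qed

lemma piece1:
  assumes X: "2 \<le> length X" "\<forall>t\<in>set X. wf_tree t" and g: "good (F :: tree \<Rightarrow> 'k::field) (last X) b"
  shows "good (lmap (\<lambda>t. Node (butlast X @ [t])) F) (Node X) b"
proof (rule good_lmap[OF g])
  fix t assume t: "wf_tree t" "nl t + 1 = nl (last X) + nl b" "ni t \<le> ni (last X) + ni b"
  have ne: "X \<noteq> []" using X by auto
  have "wf_tree (Node (butlast X @ [t]))" using X t by (auto dest: in_set_butlastD)
  moreover have "nl (Node (butlast X @ [t])) + 1 = nl (Node X) + nl b"
    using t sum_bl[OF ne, of nl] by simp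
  moreover have "ni (Node (butlast X @ [t])) \<le> ni (Node X) + ni b"
    using t sum_bl[OF ne, of ni] by simp
  ultimately show "wf_tree (Node (butlast X @ [t])) \<and> nl (Node (butlast X @ [t])) + 1 = nl (Node X) + nl b \<and>
     ni (Node (butlast X @ [t])) \<le> ni (Node X) + ni b" by blast
qed

lemma piece2:
  assumes X: "2 \<le> length X" "\<forall>t\<in>set X. wf_tree t" and Y: "\<forall>t\<in>set ys. wf_tree t"
    and g: "good (F :: tree \<Rightarrow> 'k::field) (last X) y"
  shows "good (lmap (\<lambda>t. Node (butlast X @ [t] @ ys)) F) (Node X) (Node (y # ys))"
proof (rule good_lmap[OF g])
  fix t assume t: "wf_tree t" "nl t + 1 = nl (last X) + nl y" "ni t \<le> ni (last X) + ni y"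
  have ne: "X \<noteq> []" using X by auto
  have "wf_tree (Node (butlast X @ [t] @ ys))" using X Y t by (auto dest: in_set_butlastD)
  moreover have "nl (Node (butlast X @ [t] @ ys)) + 1 = nl (Node X) + nl (Node (y # ys))"
    using t sum_bl[OF ne, of nl] by simp
  moreover have "ni (Node (butlast X @ [t] @ ys)) \<le> ni (Node X) + ni (Node (y # ys))"
    using t sum_bl[OF ne, of ni] by simp
  ultimately show "wf_tree (Node (butlast X @ [t] @ ys)) \<and>
     nl (Node (butlast X @ [t] @ ys)) + 1 = nl (Node X) + nl (Node (y # ys)) \<and>
     ni (Node (butlast X @ [t] @ ys)) \<le> ni (Node X) + ni (Node (y # ys))" by blast
qed

lemma piece3:
  assumes Y: "ys \<noteq> []" "\<forall>t\<in>set ys. wf_tree t"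
    and g: "good (F :: tree \<Rightarrow> 'k::field) a y"
  shows "good (lmap (\<lambda>t. Node (t # ys)) F) a (Node (y # ys))"
proof (rule good_lmap[OF g])
  fix t assume t: "wf_tree t" "nl t + 1 = nl a + nl y" "ni t \<le> ni a + ni y"
  have "wf_tree (Node (t # ys))" using Y t by (cases ys) auto
  moreover have "nl (Node (t # ys)) + 1 = nl a + nl (Node (y # ys))"
    using t by simp
  moreover have "ni (Node (t # ys)) \<le> ni a + ni (Node (y # ys))"
    using t by simp
  ultimately show "wf_tree (Node (t # ys)) \<and> nl (Node (t # ys)) + 1 = nl a + nl (Node (y # ys)) \<and>
     ni (Node (t # ys)) \<le> ni a + ni (Node (y # ys))" by blast
qed

lemma good_star: "wf_tree x \<Longrightarrow> wf_tree y \<Longrightarrow> good (star_t x y :: tree \<Rightarrow> 'k::field) x y"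
proof (induction x y rule: star_t.induct)
  case (1 y) then show ?case by (auto intro: good_basis)
next
  case (2 xs) then show ?case by (simp add: good_basis)
next
  case (3 ys) then show ?case by simp
next
  case (4 x xs) then show ?case by simp
next
  case (5 x xs y ys)
  define X where "X = x # xs"
  have X: "2 \<le> length X" "\<forall>t\<in>set X. wf_tree t" using 5(4) by (auto simp: X_def)
  have lw: "wf_tree (last X)" using X by (metis last_in_set list.size(3) not_numeral_le_zero)
  have ys: "ys \<noteq> []" "\<forall>t\<in>set ys. wf_tree t" "wf_tree y" using 5(5) by auto
  have g1: "good (star_t (last X) (Node (y # ys)) :: tree \<Rightarrow> 'k) (last X) (Node (y # ys))"
    using 5(1) lw 5(5) unfolding X_def by blast
  have g2: "good (star_t (last X) y :: tree \<Rightarrow> 'k) (last X) y"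
    using 5(2) lw ys unfolding X_def by blast
  have g3: "good (star_t (Node X) y :: tree \<Rightarrow> 'k) (Node X) y"
    using 5(3) 5(4) ys unfolding X_def by blast
  have "good (\<lambda>s. lmap (\<lambda>t. Node (butlast X @ [t])) (star_t (last X) (Node (y # ys)) :: tree \<Rightarrow> 'k) s
        + lmap (\<lambda>t. Node (butlast X @ [t] @ ys)) (star_t (last X) y :: tree \<Rightarrow> 'k) s
        + lmap (\<lambda>t. Node (t # ys)) (star_t (Node X) y :: tree \<Rightarrow> 'k) s) (Node X) (Node (y # ys))"
    by (intro good_add piece1[OF X g1] piece2[OF X ys(2) g2] piece3[OF ys(1,2) g3])
  then show ?case by (simp only: X_def star_t.simps)
qed

lemma star_Leaf2: "star_t x Leaf = basis x"
  by (cases x) auto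

lemma good_prec: "wf_tree a \<Longrightarrow> wf_tree b \<Longrightarrow> good (prec_t a b :: tree \<Rightarrow> 'k::field) a b"
proof (cases a)
  case Leaf then show ?thesis by (simp add: prec_t_def good_zero)
next
  case (Node xs)
  assume wa: "wf_tree a" and wb: "wf_tree b"
  show ?thesis
  proof (cases "b = Leaf")
    case True then show ?thesis using Node wa by (auto simp: prec_t_def intro: good_basis)
  next
    case False
    have X: "2 \<le> length xs" "\<forall>t\<in>set xs. wf_tree t" using wa Node by auto
    have lw: "wf_tree (last xs)" using X by (metis last_in_set list.size(3) not_numeral_le_zero)
    show ?thesis using False Node piece1[OF X good_star[OF lw wb]] by (simp add: prec_t_def)
  qed
qed

lemma good_dot: "wf_tree a \<Longrightarrow> wf_tree b \<Longrightarrow> good (dot_t a b :: tree \<Rightarrow> 'k::field) a b"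
proof (cases a)
  case Leaf then show ?thesis by (simp add: dot_t_def good_zero)
next
  case (Node xs)
  assume wa: "wf_tree a" and wb: "wf_tree b"
  show ?thesis
  proof (cases b)
    case Leaf then show ?thesis using Node by (simp add: dot_t_def good_zero)
  next
    case (Node ys0)
    then obtain y ys where ys0: "ys0 = y # ys" using wb by (cases ys0) auto
    have X: "2 \<le> length xs" "\<forall>t\<in>set xs. wf_tree t" using wa \<open>a = Node xs\<close> by auto
    have lw: "wf_tree (last xs)" using X by (metis last_in_set list.size(3) not_numeral_le_zero)
    have Y: "\<forall>t\<in>set ys. wf_tree t" "wf_tree y" using wb Node ys0 by auto
    show ?thesis using Node \<open>a = Node xs\<close> ys0 piece2[OF X Y(1) good_star[OF lw Y(2)]]
      by (simp add: dot_t_def)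
  qed
qed

lemma good_succ: "wf_tree a \<Longrightarrow> wf_tree b \<Longrightarrow> good (succ_t a b :: tree \<Rightarrow> 'k::field) a b"
proof (cases b)
  case Leaf then show ?thesis by (simp add: succ_t_def good_zero)
next
  case (Node ys0)
  assume wa: "wf_tree a" and wb: "wf_tree b"
  show ?thesis
  proof (cases "a = Leaf")
    case True then show ?thesis using Node wb by (auto simp: succ_t_def intro: good_basis)
  next
    case False
    obtain y ys where ys0: "ys0 = y # ys" using wb Node by (cases ys0) auto
    have Y: "ys \<noteq> []" "\<forall>t\<in>set ys. wf_tree t" "wf_tree y" using wb Node ys0 by auto
    show ?thesis using Node False ys0 piece3[OF Y(1,2) good_star[OF wa Y(3)]]
      by (simp add: succ_t_def)
  qed
qed

section \<open>The ideal of non-binary combinations\<close>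

definition NB :: "(tree \<Rightarrow> 'k::field) set" where
  "NB = {f. f \<in> Aspace \<and> (\<forall>s\<in>supp f. \<not> binary_tree s)}"

lemma supp_bil: "supp (bil op f g) \<subseteq> (\<Union>t\<in>supp f. \<Union>u\<in>supp g. supp (op t u))"
proof
  fix s assume "s \<in> supp (bil op f g)"
  then have "(\<Sum>t\<in>supp f. \<Sum>u\<in>supp g. f t * g u * op t u s) \<noteq> 0"
    by (simp add: supp_def bil_def)
  then obtain t where t: "t \<in> supp f" "(\<Sum>u\<in>supp g. f t * g u * op t u s) \<noteq> 0"
    by (meson sum.not_neutral_contains_not_neutral)
  then obtain u where u: "u \<in> supp g" "f t * g u * op t u s \<noteq> 0"
    by (meson sum.not_neutral_contains_not_neutral)
  then show "s \<in> (\<Union>t\<in>supp f. \<Union>u\<in>supp g. supp (op t u))"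
    using t by (auto simp: supp_def)
qed

lemma bil_closed:
  assumes gd: "\<And>t u. wf_tree t \<Longrightarrow> wf_tree u \<Longrightarrow> good (op t u :: tree \<Rightarrow> 'k::field) t u"
    and x: "x \<in> Aspace" and y: "y \<in> Aspace"
  shows "bil op x y \<in> Aspace \<and> ((x \<in> NB \<or> y \<in> NB) \<longrightarrow> bil op x y \<in> NB)"
proof -
  have fx: "finite (supp x)" "\<forall>t\<in>supp x. wf_tree t" using x by (auto simp: Aspace_def)
  have fy: "finite (supp y)" "\<forall>t\<in>supp y. wf_tree t" using y by (auto simp: Aspace_def)
  have fin: "finite (\<Union>t\<in>supp x. \<Union>u\<in>supp y. supp (op t u))"
    using fx fy gd unfolding good_def by (intro finite_UN_I) auto
  have el: "\<exists>t\<in>supp x. \<exists>u\<in>supp y. wf_tree s \<and> nl s + 1 = nl t + nl u \<and> ni s \<le> ni t + ni u"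
    if "s \<in> supp (bil op x y)" for s
  proof -
    have "s \<in> (\<Union>t\<in>supp x. \<Union>u\<in>supp y. supp (op t u))"
      using subsetD[OF supp_bil that] .
    then obtain t u where tu: "t \<in> supp x" "u \<in> supp y" "s \<in> supp (op t u)"
      by blast
    then show ?thesis using gd[of t u] fx fy unfolding good_def by blast
  qed
  have A: "bil op x y \<in> Aspace"
    unfolding Aspace_def using el fin supp_bil[of op x y] rev_finite_subset by blast
  moreover have "bil op x y \<in> NB" if "x \<in> NB \<or> y \<in> NB"
  proof -
    have "\<not> binary_tree s" if s: "s \<in> supp (bil op x y)" for s
    proof
      assume b: "binary_tree s"
      obtain t u where tu: "t \<in> supp x" "u \<in> supp y" "wf_tree s" "nl s + 1 = nl t + nl u" "ni s \<le> ni t + ni u"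
        using el[OF s] by blast
      have wt: "wf_tree t" "wf_tree u" using tu fx fy by auto
      have "\<not> binary_tree t \<or> \<not> binary_tree u" using \<open>x \<in> NB \<or> y \<in> NB\<close> tu by (auto simp: NB_def)
      then have "ni t + ni u + 3 \<le> nl t + nl u"
        using ni_nl[OF wt(1)] ni_nl[OF wt(2)] ni_nl_nonbin[OF wt(1)] ni_nl_nonbin[OF wt(2)] by auto
      then show False using ni_nl_bin[OF b] tu by linarith
    qed
    then show ?thesis using A by (auto simp: NB_def)
  qed
  ultimately show ?thesis by blast
qed

lemma NB_ideal: "tridend_ideal (NB :: (tree \<Rightarrow> 'k::field) set)"
  unfolding tridend_ideal_def
proof (intro conjI ballI allI impI)
  show "NB \<subseteq> Aspace" by (auto simp: NB_def)
  show "(\<lambda>_. 0) \<in> (NB :: (tree \<Rightarrow> 'k::field) set)" by (simp add: NB_def Aspace_def supp_def)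
next
  fix f g :: "tree \<Rightarrow> 'k" assume "f \<in> NB" "g \<in> NB"
  moreover have "supp (\<lambda>s. f s + g s) \<subseteq> supp f \<union> supp g" by (auto simp: supp_def)
  moreover have "finite (supp f \<union> supp g)" using \<open>f \<in> NB\<close> \<open>g \<in> NB\<close> by (simp add: NB_def Aspace_def)
  ultimately have "finite (supp (\<lambda>s. f s + g s))" using rev_finite_subset by blast
  with \<open>f \<in> NB\<close> \<open>g \<in> NB\<close> \<open>supp (\<lambda>s. f s + g s) \<subseteq> supp f \<union> supp g\<close>
  show "(\<lambda>s. f s + g s) \<in> NB"
    unfolding NB_def Aspace_def by blast
next
  fix c :: 'k and f :: "tree \<Rightarrow> 'k" assume "f \<in> NB"
  moreover have "supp (\<lambda>s. c * f s) \<subseteq> supp f" by (auto simp: supp_def)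
  ultimately show "(\<lambda>s. c * f s) \<in> NB"
    unfolding NB_def Aspace_def using rev_finite_subset by blast
next
  fix x y :: "tree \<Rightarrow> 'k" assume "x \<in> Aspace" "y \<in> Aspace" "x \<in> NB \<or> y \<in> NB"
  then show "bil prec_t x y \<in> NB" "bil dot_t x y \<in> NB" "bil succ_t x y \<in> NB"
    using bil_closed[of prec_t x y, OF good_prec] bil_closed[of dot_t x y, OF good_dot]
      bil_closed[of succ_t x y, OF good_succ] by blast+
qed

lemma gens_NB: "{bil dot_t x y | x y. x \<in> Aplus \<and> y \<in> Aplus} \<subseteq> (NB :: (tree \<Rightarrow> 'k::field) set)"
proof clarify
  fix x y :: "tree \<Rightarrow> 'k" assume x: "x \<in> Aplus" and y: "y \<in> Aplus"
  have xa: "x \<in> Aspace" and ya: "y \<in> Aspace" using x y by (auto simp: Aplus_def)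
  have fx: "\<forall>t\<in>supp x. wf_tree t \<and> t \<noteq> Leaf" using x by (auto simp: Aplus_def Aspace_def supp_def)
  have fy: "\<forall>t\<in>supp y. wf_tree t \<and> t \<noteq> Leaf" using y by (auto simp: Aplus_def Aspace_def supp_def)
  have "\<not> binary_tree s" if s: "s \<in> supp (bil dot_t x y)" for s
  proof -
    obtain t u where tu: "t \<in> supp x" "u \<in> supp y" "s \<in> supp (dot_t t u :: tree \<Rightarrow> 'k)"
      using supp_bil[of dot_t x y] s by blast
    obtain xs where xs: "t = Node xs" "2 \<le> length xs" using fx tu by (cases t) auto
    obtain ys where ys: "u = Node ys" "2 \<le> length ys" using fy tu by (cases u) auto
    have "s \<in> supp (lmap (\<lambda>t. Node (butlast xs @ [t] @ tl ys)) (star_t (last xs) (hd ys) :: tree \<Rightarrow> 'k))"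
      using tu xs ys by (simp add: dot_t_def)
    then obtain r where "s = Node (butlast xs @ [r] @ tl ys)" using supp_lmap by blast
    moreover have "length (butlast xs @ [r] @ tl ys) \<ge> 3" using xs ys by auto
    ultimately show ?thesis by auto
  qed
  then show "bil dot_t x y \<in> NB"
    using bil_closed[of dot_t x y, OF good_dot xa ya] by (auto simp: NB_def)
qed

section \<open>Non-binary trees are in every such ideal\<close>

lemma bil_basis: "bil op (basis a) (basis b :: tree \<Rightarrow> 'k::field) = op a b"
  unfolding bil_def supp_basis by (rule ext) (simp add: basis_def)

lemma basis_Aspace: "wf_tree a \<Longrightarrow> (basis a :: tree \<Rightarrow> 'k::field) \<in> Aspace"
  by (simp add: Aspace_def supp_basis)

lemma basis_Aplus: "wf_tree a \<Longrightarrow> a \<noteq> Leaf \<Longrightarrow> (basis a :: tree \<Rightarrow> 'k::field) \<in> Aplus"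
  by (simp add: Aplus_def basis_Aspace) (simp add: basis_def)

lemma ideal_op1:
  assumes J: "tridend_ideal J" and a: "(basis a :: tree \<Rightarrow> 'k::field) \<in> J" and b: "wf_tree b"
  shows "prec_t a b \<in> J \<and> dot_t a b \<in> J \<and> succ_t a b \<in> J"
proof -
  have "(basis a :: tree \<Rightarrow> 'k) \<in> Aspace" using J a by (auto simp: tridend_ideal_def)
  then show ?thesis using J a basis_Aspace[OF b, where 'k='k] unfolding tridend_ideal_def bil_basis
    by (metis bil_basis)
qed

lemma ideal_op2:
  assumes J: "tridend_ideal J" and a: "wf_tree a" and b: "(basis b :: tree \<Rightarrow> 'k::field) \<in> J"
  shows "prec_t a b \<in> J \<and> dot_t a b \<in> J \<and> succ_t a b \<in> J"
proof -
  have "(basis b :: tree \<Rightarrow> 'k) \<in> Aspace" using J b by (auto simp: tridend_ideal_def)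
  then show ?thesis using J b basis_Aspace[OF a, where 'k='k] unfolding tridend_ideal_def
    by (metis bil_basis)
qed

lemma mem_J:
  assumes J: "tridend_ideal (J :: (tree \<Rightarrow> 'k::field) set)"
    and G: "{bil dot_t x y | x y. x \<in> Aplus \<and> y \<in> Aplus} \<subseteq> J"
  shows "wf_tree t \<Longrightarrow> \<not> binary_tree t \<Longrightarrow> (basis t :: tree \<Rightarrow> 'k) \<in> J"
proof (induction t)
  case Leaf then show ?case by simp
next
  case (Node ts)
  from Node.prems have len: "2 \<le> length ts" and wfs: "\<forall>c\<in>set ts. wf_tree c" by auto
  show ?case
  proof (cases "\<exists>c\<in>set ts. \<not> binary_tree c")
    case True
    then obtain c where c: "c \<in> set ts" "\<not> binary_tree c" by blast
    have cJ: "(basis c :: tree \<Rightarrow> 'k) \<in> J" using Node.IH c wfs by blast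
    have cL: "c \<noteq> Leaf" using c by auto
    obtain A B where ts: "ts = A @ c # B" using split_list[OF c(1)] by blast
    have succ: "(basis (Node (c # B)) :: tree \<Rightarrow> 'k) \<in> J" if "B \<noteq> []"
    proof -
      have w: "wf_tree (Node (Leaf # B))" using that wfs ts by (cases B) auto
      have "(succ_t c (Node (Leaf # B)) :: tree \<Rightarrow> 'k) \<in> J" using ideal_op1[OF J cJ w] by blast
      moreover have "(succ_t c (Node (Leaf # B)) :: tree \<Rightarrow> 'k) = basis (Node (c # B))"
        using cL by (simp add: succ_t_def star_Leaf2 lmap_basis)
      ultimately show ?thesis by simp
    qed
    show ?thesis
    proof (cases "A = []")
      case True
      then have "B \<noteq> []" using len ts by auto
      then show ?thesis using succ ts True by simp
    next
      case False
      have wA: "wf_tree (Node (A @ [Leaf]))" using False wfs ts by (cases A) auto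
      show ?thesis
      proof (cases "B = []")
        case True
        have "(prec_t (Node (A @ [Leaf])) c :: tree \<Rightarrow> 'k) \<in> J" using ideal_op2[OF J wA cJ] by blast
        moreover have "(prec_t (Node (A @ [Leaf])) c :: tree \<Rightarrow> 'k) = basis (Node (A @ [c]))"
          using cL by (simp add: prec_t_def lmap_basis)
        ultimately show ?thesis using ts True by simp
      next
        case False
        have sJ: "(basis (Node (c # B)) :: tree \<Rightarrow> 'k) \<in> J" using succ False by blast
        have "(dot_t (Node (A @ [Leaf])) (Node (c # B)) :: tree \<Rightarrow> 'k) \<in> J" using ideal_op2[OF J wA sJ] by blast
        moreover have "(dot_t (Node (A @ [Leaf])) (Node (c # B)) :: tree \<Rightarrow> 'k) = basis (Node (A @ c # B))"
          by (simp add: dot_t_def lmap_basis)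
        ultimately show ?thesis using ts by simp
      qed
    qed
  next
    case False
    with Node.prems have "length ts \<noteq> 2" by auto
    with len obtain x0 x1 x2 rest where ts: "ts = x0 # x1 # x2 # rest"
      by (cases ts; cases "tl ts"; cases "tl (tl ts)") auto
    have w1: "wf_tree (Node [x0, x1])" "Node [x0, x1] \<noteq> Leaf" using wfs ts by auto
    have w2: "wf_tree (Node (Leaf # x2 # rest))" "Node (Leaf # x2 # rest) \<noteq> Leaf" using wfs ts by auto
    have "bil dot_t (basis (Node [x0, x1])) (basis (Node (Leaf # x2 # rest))) \<in> J"
      using G basis_Aplus[OF w1, where 'k='k] basis_Aplus[OF w2, where 'k='k] by blast
    moreover have "bil dot_t (basis (Node [x0, x1])) (basis (Node (Leaf # x2 # rest))) = (basis (Node ts) :: tree \<Rightarrow> 'k)"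
      unfolding bil_basis using ts by (simp add: dot_t_def star_Leaf2 lmap_basis)
    ultimately show ?thesis by simp
  qed
qed

theorem mainTheorem18:
  fixes t :: tree
  assumes "wf_tree t"
  shows "\<not> binary_tree t \<longleftrightarrow>
    (basis t :: tree \<Rightarrow> 'k::field) \<in>
      gen_tridend_ideal {bil dot_t x y | x y. x \<in> Aplus \<and> y \<in> Aplus}"
proof
  assume "\<not> binary_tree t"
  then show "(basis t :: tree \<Rightarrow> 'k::field) \<in> gen_tridend_ideal {bil dot_t x y | x y. x \<in> Aplus \<and> y \<in> Aplus}"
    unfolding gen_tridend_ideal_def using mem_J assms by blast
next
  assume "(basis t :: tree \<Rightarrow> 'k::field) \<in> gen_tridend_ideal {bil dot_t x y | x y. x \<in> Aplus \<and> y \<in> Aplus}"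
  then have "(basis t :: tree \<Rightarrow> 'k::field) \<in> NB"
    unfolding gen_tridend_ideal_def using NB_ideal gens_NB by blast
  then show "\<not> binary_tree t" by (auto simp: NB_def supp_basis)
qed

end
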